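(* Let $\{P^{[n]}\in\mathbb{R}^{n\times n}\}_{n\in\mathbb{N}}$ be a sequence of primitive stochastic matrices of increasing dimensions. If $$\lim_{n\to\infty}\ \sup_{k\in\mathbb{N}}\Big\|\tfrac{1}{n}(P^{[n]})^k\Big\|_1\,\tau_{\mathrm{mix}}(P^{[n]})=0,$$ then the sequence is uniformly wise, i.e. $\sup_{k\in\mathbb{N}}|\mathrm{ave}(x^{[n]}(k))-\mu|\to 0$ in probability as $n\to\infty$.
   Context: A matrix $P\in\mathbb{R}^{n\times n}$ is stochastic if $P\ge0$ and $P\mathbf{1}_n=\mathbf{1}_n$; primitive if its associated directed graph (edge $(i,j)$ iff $P_{ij}>0$) is strongly connected and aperiodic. $\|P\|_1=\max_j\sum_i P_{ij}$ (maximum column sum). The mixing time of a primitive stochastic $P$ is $\tau_{\mathrm{mix}}(P)=\inf\{t\in\mathbb{N}:\max_{i,j}\sum_{k}|(P^t)_{ik}-(P^t)_{jk}|\le 1/e\}$. For $x\in\mathbb{R}^n$, $\mathrm{ave}(x)=\frac1n\sum_i x_i$. Setting: for each $n$, $x^{[n]}_i(0)=\mu+\xi^{[n]}_i(0)$ with $\mu\in\mathbb{R}$ fixed and $\xi^{[n]}_1(0),\dots,\xi^{[n]}_n(0)$ independent Gaussian with mean $0$ and common finite variance $\sigma^2$; and $x^{[n]}(k+1)=P^{[n]}x^{[n]}(k)$ for $k\ge0$. *)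

theory Defs
  imports "HOL-Probability.Probability"
begin

text \<open>n x n real matrices are represented as functions nat => nat => real,
  with indices ranging over {..<n} (0-based).\<close>

definition stochastic :: "nat \<Rightarrow> (nat \<Rightarrow> nat \<Rightarrow> real) \<Rightarrow> bool" where
  "stochastic n A \<longleftrightarrow> (\<forall>i<n. \<forall>j<n. 0 \<le> A i j) \<and> (\<forall>i<n. (\<Sum>j<n. A i j) = 1)"

definition walk :: "nat \<Rightarrow> (nat \<Rightarrow> nat \<Rightarrow> real) \<Rightarrow> nat \<Rightarrow> nat \<Rightarrow> nat \<Rightarrow> bool" where
  "walk n A i j k \<longleftrightarrow> (\<exists>v :: nat \<Rightarrow> nat. v 0 = i \<and> v k = j \<and>
      (\<forall>t\<le>k. v t < n) \<and> (\<forall>t<k. 0 < A (v t) (v (Suc t))))"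

definition strongly_connected :: "nat \<Rightarrow> (nat \<Rightarrow> nat \<Rightarrow> real) \<Rightarrow> bool" where
  "strongly_connected n A \<longleftrightarrow> (\<forall>i<n. \<forall>j<n. \<exists>k. walk n A i j k)"

definition aperiodic :: "nat \<Rightarrow> (nat \<Rightarrow> nat \<Rightarrow> real) \<Rightarrow> bool" where
  "aperiodic n A \<longleftrightarrow> Gcd {k. 0 < k \<and> (\<exists>i<n. walk n A i i k)} = 1"

definition primitive :: "nat \<Rightarrow> (nat \<Rightarrow> nat \<Rightarrow> real) \<Rightarrow> bool" where
  "primitive n A \<longleftrightarrow> strongly_connected n A \<and> aperiodic n A"

fun matpow :: "nat \<Rightarrow> (nat \<Rightarrow> nat \<Rightarrow> real) \<Rightarrow> nat \<Rightarrow> nat \<Rightarrow> nat \<Rightarrow> real" where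
  "matpow n A 0 = (\<lambda>i j. if i = j then 1 else 0)"
| "matpow n A (Suc k) = (\<lambda>i j. \<Sum>l<n. matpow n A k i l * A l j)"

definition norm1 :: "nat \<Rightarrow> (nat \<Rightarrow> nat \<Rightarrow> real) \<Rightarrow> real" where
  "norm1 n A = Max ((\<lambda>j. \<Sum>i<n. \<bar>A i j\<bar>) ` {..<n})"

definition tau_mix :: "nat \<Rightarrow> (nat \<Rightarrow> nat \<Rightarrow> real) \<Rightarrow> nat" where
  "tau_mix n A = Inf {t. \<forall>i<n. \<forall>j<n.
      (\<Sum>k<n. \<bar>matpow n A t i k - matpow n A t j k\<bar>) \<le> 1 / exp 1}"

definition ave :: "nat \<Rightarrow> (nat \<Rightarrow> real) \<Rightarrow> real" where
  "ave n x = (\<Sum>i<n. x i) / real n"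

definition state :: "nat \<Rightarrow> (nat \<Rightarrow> nat \<Rightarrow> real) \<Rightarrow> real \<Rightarrow> (nat \<Rightarrow> real) \<Rightarrow> nat \<Rightarrow> nat \<Rightarrow> real" where
  "state n A \<mu> \<xi>0 k i = (\<Sum>j<n. matpow n A k i j * (\<mu> + \<xi>0 j))"

end

theory Submission
  imports Defs
begin
lemma matpow_add:
  assumes "j < n"
  shows "matpow n A (a + b) i j = (\<Sum>l<n. matpow n A a i l * matpow n A b l j)"
  using assms
proof (induction b arbitrary: j)
  case 0
  then show ?case by (simp add: if_distrib[of "\<lambda>x. _ * x"] sum.delta' cong: if_cong)
next
  case (Suc b)
  have "matpow n A (a + Suc b) i j = (\<Sum>l<n. matpow n A (a+b) i l * A l j)" by simp
  also have "\<dots> = (\<Sum>l<n. (\<Sum>m<n. matpow n A a i m * matpow n A b m l) * A l j)"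
    using Suc.IH by simp
  also have "\<dots> = (\<Sum>m<n. matpow n A a i m * (\<Sum>l<n. matpow n A b m l * A l j))"
    by (simp add: sum_distrib_left sum_distrib_right mult.assoc) (rule sum.swap)
  finally show ?case by simp
qed

lemma stoch_nonneg: "stochastic n A \<Longrightarrow> i < n \<Longrightarrow> j < n \<Longrightarrow> 0 \<le> A i j"
  unfolding stochastic_def by auto

lemma stoch_rowsum: "stochastic n A \<Longrightarrow> i < n \<Longrightarrow> (\<Sum>j<n. A i j) = 1"
  unfolding stochastic_def by auto

lemma matpow_nonneg:
  assumes "stochastic n A" "i < n" "j < n"
  shows "0 \<le> matpow n A k i j"
  using assms(3)
proof (induction k arbitrary: j)
  case 0 then show ?case by simp
next
  case (Suc k) then show ?case
    by (auto intro!: sum_nonneg mult_nonneg_nonneg stoch_nonneg[OF assms(1)])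
qed

lemma matpow_rowsum:
  assumes "stochastic n A" "i < n"
  shows "(\<Sum>j<n. matpow n A k i j) = 1"
proof (induction k)
  case 0 then show ?case using assms(2) by (simp add: sum.delta)
next
  case (Suc k)
  have "(\<Sum>j<n. matpow n A (Suc k) i j) = (\<Sum>l<n. matpow n A k i l * (\<Sum>j<n. A l j))"
    by (simp add: sum_distrib_left) (rule sum.swap)
  also have "\<dots> = (\<Sum>l<n. matpow n A k i l)"
    by (simp add: stoch_rowsum[OF assms(1)])
  finally show ?case using Suc by simp
qed

lemma matpow_le1:
  assumes "stochastic n A" "i < n" "j < n"
  shows "matpow n A k i j \<le> 1"
proof -
  have "matpow n A k i j \<le> (\<Sum>j<n. matpow n A k i j)"
    by (rule member_le_sum) (use assms matpow_nonneg in auto)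
  then show ?thesis using matpow_rowsum[OF assms(1,2)] by simp
qed

lemma walk_pos_aux:
  assumes "stochastic n A"
  shows "(\<forall>t\<le>k. v t < n) \<Longrightarrow> (\<forall>t<k. 0 < A (v t) (v (Suc t))) \<Longrightarrow> 0 < matpow n A k (v 0) (v k)"
proof (induction k)
  case 0 then show ?case by simp
next
  case (Suc k)
  have ih: "0 < matpow n A k (v 0) (v k)" using Suc by auto
  have vk: "v k < n" "v (Suc k) < n" "v 0 < n" using Suc.prems by auto
  have "0 < matpow n A k (v 0) (v k) * A (v k) (v (Suc k))"
    using ih Suc.prems by auto
  also have "\<dots> \<le> (\<Sum>l<n. matpow n A k (v 0) l * A l (v (Suc k)))"
    by (rule member_le_sum[where f = "\<lambda>l. matpow n A k (v 0) l * A l (v (Suc k))"])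
       (use vk matpow_nonneg[OF assms] stoch_nonneg[OF assms] in auto)
  finally show ?case by simp
qed

lemma walk_pos:
  assumes "stochastic n A" "walk n A i j k"
  shows "0 < matpow n A k i j"
  using assms(2) walk_pos_aux[OF assms(1)] unfolding walk_def by blast

lemma walk_trans:
  assumes "walk n A i j a" "walk n A j l b"
  shows "walk n A i l (a + b)"
proof -
  obtain v where v: "v 0 = i" "v a = j" "\<forall>t\<le>a. v t < n" "\<forall>t<a. 0 < A (v t) (v (Suc t))"
    using assms(1) unfolding walk_def by blast
  obtain w where w: "w 0 = j" "w b = l" "\<forall>t\<le>b. w t < n" "\<forall>t<b. 0 < A (w t) (w (Suc t))"
    using assms(2) unfolding walk_def by blast
  define u where "u t = (if t \<le> a then v t else w (t - a))" for t
  have "u 0 = i" "u (a+b) = l" using v w by (auto simp: u_def)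
  moreover have "\<forall>t\<le>a+b. u t < n" using v w by (auto simp: u_def)
  moreover have "\<forall>t<a+b. 0 < A (u t) (u (Suc t))"
  proof (intro allI impI)
    fix t assume t: "t < a + b"
    show "0 < A (u t) (u (Suc t))"
    proof (cases "t < a")
      case True then show ?thesis using v by (auto simp: u_def)
    next
      case False
      then have "Suc t - a = Suc (t - a)" "t - a < b" using t by auto
      then show ?thesis using False v w
        by (cases "t = a") (auto simp: u_def)
    qed
  qed
  ultimately show ?thesis unfolding walk_def by blast
qed

lemma semigroup_cl:
  fixes S :: "nat set"
  assumes cl: "\<forall>x\<in>S. \<forall>y\<in>S. x + y \<in> S" and yS: "y \<in> S" and xS: "x \<in> S"
  shows "y + k * x \<in> S"
proof (induction k)
  case (Suc k)
  have "y + Suc k * x = (y + k * x) + x" by simp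
  then show ?case using Suc cl xS by metis
qed (simp add: yS)

lemma semigroup_gcd1:
  assumes cl: "\<And>x y. x \<in> S \<Longrightarrow> y \<in> S \<Longrightarrow> x + y \<in> (S::nat set)"
    and g: "Gcd S = 1"
  shows "\<exists>L. \<forall>m\<ge>L. m \<in> S"
proof -
  have clS: "\<forall>x\<in>S. \<forall>y\<in>S. x + y \<in> S" using cl by blast
  note C = semigroup_cl[OF clS]
  obtain s where s: "s \<in> S" "s \<noteq> 0"
  proof -
    have "\<not> S \<subseteq> {0}" using g Gcd_0_iff[of S] by auto
    then show ?thesis using that by auto
  qed
  define D where "D = {d. 0 < d \<and> (\<exists>a\<in>S. \<exists>b\<in>S. a = b + d)}"
  have "s \<in> D" using s cl unfolding D_def by force
  define d where "d = (LEAST d. d \<in> D)"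
  have dD: "d \<in> D" unfolding d_def by (rule LeastI) fact
  then obtain a b where ab: "a \<in> S" "b \<in> S" "a = b + d" "0 < d" unfolding D_def by blast
  have "d dvd x" if x: "x \<in> S" for x
  proof (rule ccontr)
    assume nd: "\<not> d dvd x"
    define q r where "q = x div d" "r = x mod d"
    have r: "0 < r" "r < d" using nd ab(4) unfolding q_r_def by (auto simp: dvd_eq_mod_eq_0)
    have xe: "x = q * d + r" unfolding q_r_def by simp
    have X: "(x + b) + q * b \<in> S" using C cl x ab by auto
    have Y: "b + q * a \<in> S" using C ab by auto
    have "(x + b) + q * b = (b + q * a) + r" using xe ab(3) by (simp add: algebra_simps)
    then have "r \<in> D" using X Y r unfolding D_def by blast
    then have "d \<le> r" unfolding d_def by (rule Least_le)
    then show False using r by simp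
  qed
  then have "d dvd Gcd S" by (rule Gcd_greatest)
  then have d1: "d = 1" using g by simp
  show ?thesis
  proof (cases "b = 0")
    case True
    then have a1: "a = 1" using ab d1 by simp
    have "m \<in> S" if "m \<ge> 1" for m
      using C[OF ab(1) ab(1), of "m - 1"] a1 that by simp
    then show ?thesis by blast
  next
    case False
    have "m \<in> S" if m: "m \<ge> b * b" for m
    proof -
      define q r where "q = m div b" "r = m mod b"
      have r: "r < b" using False unfolding q_r_def by simp
      have "b * b \<le> b * q + r" using m unfolding q_r_def by simp
      then have "b \<le> q"
      proof (rule contrapos_pp)
        assume "\<not> b \<le> q"
        then have "b * (q + 1) \<le> b * b" by (intro mult_le_mono2) simp
        then show "\<not> b * b \<le> b * q + r" using r by simp
      qed
      then have qr: "q - r \<ge> 1" using r by simp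
      have "m = q * b + r" unfolding q_r_def by simp
      also have "\<dots> = (b + (q - r - 1) * b) + r * a"
      proof -
        define t where "t = q - r - 1"
        have t: "q = r + 1 + t" using qr by (simp add: t_def)
        show ?thesis using ab(3) d1 unfolding t by (simp add: algebra_simps)
      qed
      finally have me: "m = (b + (q - r - 1) * b) + r * a" .
      show ?thesis unfolding me by (intro C ab) 
    qed
    then show ?thesis by blast
  qed
qed

lemma contraction:
  fixes d :: "nat \<Rightarrow> real" and Q :: "nat \<Rightarrow> nat \<Rightarrow> real"
  assumes d0: "(\<Sum>i<n. d i) = 0"
    and QD: "\<And>i j. i < n \<Longrightarrow> j < n \<Longrightarrow> (\<Sum>k<n. \<bar>Q i k - Q j k\<bar>) \<le> D"
  shows "(\<Sum>k<n. \<bar>\<Sum>i<n. d i * Q i k\<bar>) \<le> D / 2 * (\<Sum>i<n. \<bar>d i\<bar>)"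
proof -
  define p where "p i = max (d i) 0" for i
  define q where "q i = max (- d i) 0" for i
  have pq: "d i = p i - q i" "\<bar>d i\<bar> = p i + q i" "0 \<le> p i" "0 \<le> q i" for i
    unfolding p_def q_def by auto
  define h where "h = (\<Sum>i<n. p i)"
  have hq: "(\<Sum>i<n. q i) = h"
    using d0 unfolding h_def pq(1) by (simp add: sum_subtractf)
  have h0: "0 \<le> h" unfolding h_def by (simp add: sum_nonneg pq)
  have sd: "(\<Sum>i<n. \<bar>d i\<bar>) = 2 * h"
    unfolding pq(2) sum.distrib hq h_def by simp
  have key: "h * (\<Sum>i<n. d i * Q i k) = (\<Sum>i<n. \<Sum>j<n. p i * q j * (Q i k - Q j k))" for k
  proof -
    have "(\<Sum>i<n. \<Sum>j<n. p i * q j * (Q i k - Q j k))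
        = (\<Sum>i<n. \<Sum>j<n. p i * q j * Q i k) - (\<Sum>i<n. \<Sum>j<n. p i * q j * Q j k)"
      by (simp add: right_diff_distrib sum_subtractf)
    also have "(\<Sum>i<n. \<Sum>j<n. p i * q j * Q i k) = h * (\<Sum>i<n. p i * Q i k)"
      by (simp add: hq[symmetric] sum_distrib_left sum_distrib_right mult_ac)
    also have "(\<Sum>i<n. \<Sum>j<n. p i * q j * Q j k) = h * (\<Sum>j<n. q j * Q j k)"
      by (simp add: h_def sum_distrib_left sum_distrib_right mult_ac) (rule sum.swap)
    finally show ?thesis
      by (simp add: pq(1) left_diff_distrib sum_subtractf right_diff_distrib)
  qed
  have "h * (\<Sum>k<n. \<bar>\<Sum>i<n. d i * Q i k\<bar>) = (\<Sum>k<n. \<bar>h * (\<Sum>i<n. d i * Q i k)\<bar>)"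
    by (subst sum_distrib_left) (rule sum.cong, simp, simp add: abs_mult h0)
  also have "\<dots> = (\<Sum>k<n. \<bar>\<Sum>i<n. \<Sum>j<n. p i * q j * (Q i k - Q j k)\<bar>)"
    using key by simp
  also have "\<dots> \<le> (\<Sum>k<n. \<Sum>i<n. \<Sum>j<n. p i * q j * \<bar>Q i k - Q j k\<bar>)"
  proof (rule sum_mono)
    fix k
    have "\<bar>\<Sum>i<n. \<Sum>j<n. p i * q j * (Q i k - Q j k)\<bar> \<le> (\<Sum>i<n. \<bar>\<Sum>j<n. p i * q j * (Q i k - Q j k)\<bar>)"
      by (rule sum_abs)
    also have "\<dots> \<le> (\<Sum>i<n. \<Sum>j<n. \<bar>p i * q j * (Q i k - Q j k)\<bar>)"
      by (intro sum_mono sum_abs)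
    also have "\<dots> = (\<Sum>i<n. \<Sum>j<n. p i * q j * \<bar>Q i k - Q j k\<bar>)"
      using pq by (simp add: abs_mult)
    finally show "\<bar>\<Sum>i<n. \<Sum>j<n. p i * q j * (Q i k - Q j k)\<bar> \<le> (\<Sum>i<n. \<Sum>j<n. p i * q j * \<bar>Q i k - Q j k\<bar>)" .
  qed
  also have "\<dots> = (\<Sum>i<n. \<Sum>j<n. p i * q j * (\<Sum>k<n. \<bar>Q i k - Q j k\<bar>))"
    by (subst sum.swap, rule sum.cong[OF refl], subst sum.swap, simp add: sum_distrib_left)
  also have "\<dots> \<le> (\<Sum>i<n. \<Sum>j<n. p i * q j * D)"
    by (intro sum_mono mult_left_mono QD) (auto simp: pq)
  also have "\<dots> = (\<Sum>i<n. p i) * (\<Sum>j<n. q j) * D"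
    by (simp add: sum_product sum_distrib_right sum_distrib_left mult_ac) (rule sum.swap)
  also have "\<dots> = h * (h * D)"
    using hq unfolding h_def by simp
  finally have main: "h * (\<Sum>k<n. \<bar>\<Sum>i<n. d i * Q i k\<bar>) \<le> h * (h * D)" .
  show ?thesis
  proof (cases "h = 0")
    case True
    have "p i = 0" if "i < n" for i
      using True unfolding h_def using sum_nonneg_eq_0_iff[of "{..<n}" p] pq(3) that by auto
    moreover have "q i = 0" if "i < n" for i
      using True hq sum_nonneg_eq_0_iff[of "{..<n}" q] pq(4) that by auto
    ultimately have "d i = 0" if "i < n" for i using pq(1) that by auto
    then show ?thesis by simp
  next
    case False
    then have "(\<Sum>k<n. \<bar>\<Sum>i<n. d i * Q i k\<bar>) \<le> h * D"
      using main h0 by (simp add: mult_le_cancel_left)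
    then show ?thesis using sd by (simp add: mult.commute)
  qed
qed

lemma closed_walks_large:
  assumes sc: "strongly_connected n A" and ap: "aperiodic n A" and i: "i < n"
  shows "\<exists>L. \<forall>m\<ge>L. walk n A i i m"
proof -
  define S where "S = {k. 0 < k \<and> walk n A i i k}"
  define U where "U = {k. 0 < k \<and> (\<exists>j<n. walk n A j j k)}"
  have cl: "x + y \<in> S" if "x \<in> S" "y \<in> S" for x y
    using that walk_trans unfolding S_def by auto
  have "Gcd S dvd u" if u: "u \<in> U" for u
  proof -
    obtain j where j: "j < n" "walk n A j j u" "0 < u" using u unfolding U_def by auto
    obtain a where a: "walk n A i j a" using sc i j unfolding strongly_connected_def by blast
    obtain b where b: "walk n A j i b" using sc i j unfolding strongly_connected_def by blast
    have w1: "walk n A i i (a + b)" by (rule walk_trans[OF a b])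
    have w2: "walk n A i i (a + u + b)" by (rule walk_trans[OF walk_trans[OF a j(2)] b])
    have d2: "Gcd S dvd (a + b) + u"
    proof -
      have "a + u + b \<in> S" using w2 j unfolding S_def by auto
      then have "Gcd S dvd a + u + b" by (rule Gcd_dvd)
      then show ?thesis by (simp add: ac_simps)
    qed
    have d1: "Gcd S dvd a + b"
    proof (cases "a + b = 0")
      case False
      then have "a + b \<in> S" using w1 unfolding S_def by auto
      then show ?thesis by (rule Gcd_dvd)
    qed simp
    show ?thesis using d1 d2 by (simp add: dvd_add_right_iff)
  qed
  then have "Gcd S dvd Gcd U" by (intro Gcd_greatest) auto
  moreover have "Gcd U = 1" using ap unfolding aperiodic_def U_def by simp
  ultimately have "Gcd S = 1" by simp
  from semigroup_gcd1[OF cl this] obtain L where "\<forall>m\<ge>L. m \<in> S" by blast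
  then show ?thesis unfolding S_def by blast
qed

lemma primitive_pos_power:
  assumes st: "stochastic n A" and pr: "primitive n A"
  shows "\<exists>T. \<forall>i<n. \<forall>j<n. 0 < matpow n A T i j"
proof -
  have sc: "strongly_connected n A" and ap: "aperiodic n A" using pr unfolding primitive_def by auto
  have ex: "\<exists>L. \<forall>m\<ge>L. walk n A i j m" if ij: "i < n" "j < n" for i j
  proof -
    obtain L where L: "\<forall>m\<ge>L. walk n A i i m" using closed_walks_large[OF sc ap ij(1)] by blast
    obtain l where l: "walk n A i j l" using sc ij unfolding strongly_connected_def by blast
    have "walk n A i j m" if "m \<ge> L + l" for m
    proof -
      have "walk n A i i (m - l)" using L that by auto
      from walk_trans[OF this l] show ?thesis using that by simp
    qed
    then show ?thesis by blast
  qed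
  define f where "f i j = (SOME L. \<forall>m\<ge>L. walk n A i j m)" for i j
  have f: "\<forall>m\<ge>f i j. walk n A i j m" if "i < n" "j < n" for i j
    unfolding f_def by (rule someI_ex) (rule ex[OF that])
  define T where "T = (\<Sum>i<n. \<Sum>j<n. f i j)"
  have "f i j \<le> T" if ij: "i < n" "j < n" for i j
  proof -
    have "f i j \<le> (\<Sum>j<n. f i j)" by (rule member_le_sum) (use ij in auto)
    also have "\<dots> \<le> T" unfolding T_def by (rule member_le_sum[where f = "\<lambda>i. \<Sum>j<n. f i j"]) (use ij in auto)
    finally show ?thesis .
  qed
  then have "walk n A i j T" if "i < n" "j < n" for i j using f that by blast
  then show ?thesis using walk_pos[OF st] by blast
qed

lemma row_dist_init: "(\<Sum>k<(n::nat). \<bar>(if i = k then 1 else 0) - (if j = k then 1 else (0::real))\<bar>) \<le> 2"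
proof -
  have "(\<Sum>k<n. \<bar>(if i = k then 1 else 0) - (if j = k then 1 else (0::real))\<bar>)
     \<le> (\<Sum>k<n. (if i = k then 1 else 0) + (if j = k then 1 else (0::real)))"
    by (intro sum_mono) auto
  also have "\<dots> \<le> 2"
  proof -
    have e: "(\<Sum>k<n. if a = k then 1 else 0) = (if a < n then 1 else (0::real))" for a
      by (induction n) auto
    show ?thesis by (simp add: sum.distrib e)
  qed
  finally show ?thesis .
qed

lemma mix_iter:
  assumes st: "stochastic n A" and D0: "0 \<le> D"
    and QD: "\<And>i j. i < n \<Longrightarrow> j < n \<Longrightarrow> (\<Sum>k<n. \<bar>matpow n A T i k - matpow n A T j k\<bar>) \<le> D"
    and ij: "i < n" "j < n"
  shows "(\<Sum>k<n. \<bar>matpow n A (T * m) i k - matpow n A (T * m) j k\<bar>) \<le> 2 * (D / 2) ^ m"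
proof (induction m)
  case 0 then show ?case using row_dist_init[where n=n and i=i and j=j] by simp
next
  case (Suc m)
  define d where "d l = matpow n A (T * m) i l - matpow n A (T * m) j l" for l
  have e: "matpow n A (T * Suc m) i k - matpow n A (T * Suc m) j k = (\<Sum>l<n. d l * matpow n A T l k)"
    if "k < n" for k
  proof -
    have tt: "T * Suc m = T * m + T" by simp
    have h: "matpow n A (T * Suc m) x k = (\<Sum>l<n. matpow n A (T * m) x l * matpow n A T l k)" for x
      unfolding tt by (rule matpow_add[OF that])
    show ?thesis unfolding d_def h
      by (simp add: left_diff_distrib sum_subtractf)
  qed
  have d0: "(\<Sum>l<n. d l) = 0"
    unfolding d_def by (simp add: sum_subtractf matpow_rowsum[OF st ij(1)] matpow_rowsum[OF st ij(2)])
  have "(\<Sum>k<n. \<bar>matpow n A (T * Suc m) i k - matpow n A (T * Suc m) j k\<bar>)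
      = (\<Sum>k<n. \<bar>\<Sum>l<n. d l * matpow n A T l k\<bar>)" using e by simp
  also have "\<dots> \<le> D / 2 * (\<Sum>l<n. \<bar>d l\<bar>)"
    by (rule contraction[OF d0 QD])
  also have "\<dots> \<le> D / 2 * (2 * (D / 2) ^ m)"
    using Suc.IH D0 unfolding d_def by (intro mult_left_mono) auto
  finally show ?case by simp
qed

definition mixset :: "nat \<Rightarrow> (nat \<Rightarrow> nat \<Rightarrow> real) \<Rightarrow> nat set" where
  "mixset n A = {t. \<forall>i<n. \<forall>j<n. (\<Sum>k<n. \<bar>matpow n A t i k - matpow n A t j k\<bar>) \<le> 1 / exp 1}"

lemma mixset_nonempty:
  assumes st: "stochastic n A" and pr: "primitive n A" and n: "1 \<le> n"
  shows "\<exists>t. t \<in> mixset n A"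
proof -
  obtain T where T: "\<forall>i<n. \<forall>j<n. 0 < matpow n A T i j" using primitive_pos_power[OF st pr] by blast
  define Q where "Q = matpow n A T"
  have dist_lt: "(\<Sum>k<n. \<bar>Q i k - Q j k\<bar>) < 2" if ij: "i < n" "j < n" for i j
  proof -
    have "\<bar>Q i k - Q j k\<bar> = Q i k + Q j k - 2 * min (Q i k) (Q j k)" for k
      by (simp add: min_def abs_if)
    then have "(\<Sum>k<n. \<bar>Q i k - Q j k\<bar>) = (\<Sum>k<n. Q i k) + (\<Sum>k<n. Q j k) - 2 * (\<Sum>k<n. min (Q i k) (Q j k))"
      by (simp add: sum_subtractf sum.distrib sum_distrib_left)
    also have "\<dots> = 2 - 2 * (\<Sum>k<n. min (Q i k) (Q j k))"
      unfolding Q_def using matpow_rowsum[OF st ij(1)] matpow_rowsum[OF st ij(2)] by simp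
    also have "\<dots> < 2"
    proof -
      have "0 < min (Q i 0) (Q j 0)" using T ij n unfolding Q_def by auto
      also have "\<dots> \<le> (\<Sum>k<n. min (Q i k) (Q j k))"
        by (rule member_le_sum[where f = "\<lambda>k. min (Q i k) (Q j k)"]) (use T ij n in \<open>auto simp: Q_def less_imp_le\<close>)
      finally show ?thesis by simp
    qed
    finally show ?thesis .
  qed
  define D where "D = Max ((\<lambda>(i, j). \<Sum>k<n. \<bar>Q i k - Q j k\<bar>) ` ({..<n} \<times> {..<n}))"
  have fin: "finite ({..<n} \<times> {..<n})" by simp
  have "(0, 0) \<in> {..<n} \<times> {..<n}" using n by simp
  then have ne: "{..<n} \<times> {..<n} \<noteq> {}" by blast
  have QD: "(\<Sum>k<n. \<bar>Q i k - Q j k\<bar>) \<le> D" if "i < n" "j < n" for i j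
    unfolding D_def by (rule Max_ge) (use fin that in auto)
  have ne2: "(\<lambda>(i, j). \<Sum>k<n. \<bar>Q i k - Q j k\<bar>) ` ({..<n} \<times> {..<n}) \<noteq> {}" using ne by blast
  have D2: "D < 2" unfolding D_def using fin ne2 dist_lt by (subst Max_less_iff) auto
  have D0: "0 \<le> D" using QD[of 0 0] n by (meson order_trans sum_nonneg abs_ge_zero less_le_trans zero_less_one le_less_trans)
  have "eventually (\<lambda>m. (D / 2) ^ m < 1 / (2 * exp 1)) sequentially"
    by (rule order_tendstoD(2)[OF LIMSEQ_power_zero]) (use D0 D2 in auto)
  then obtain m where m0: "(D / 2) ^ m < 1 / (2 * exp 1)" by (meson eventually_sequentially order.refl)
  then have m: "2 * (D / 2) ^ m < 1 / exp 1" by (simp add: field_simps)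
  have "T * m \<in> mixset n A"
    unfolding mixset_def
  proof (intro CollectI allI impI)
    fix i j assume ij: "i < n" "j < n"
    show "(\<Sum>k<n. \<bar>matpow n A (T * m) i k - matpow n A (T * m) j k\<bar>) \<le> 1 / exp 1"
      using mix_iter[OF st D0 QD[unfolded Q_def] ij, of m] m by linarith
  qed
  then show ?thesis by blast
qed

lemma tau_mix_props:
  assumes st: "stochastic n A" and pr: "primitive n A" and n: "2 \<le> n"
  shows "1 \<le> tau_mix n A" "tau_mix n A \<in> mixset n A"
proof -
  have tm: "tau_mix n A = (LEAST t. t \<in> mixset n A)"
    unfolding tau_mix_def mixset_def by (simp add: Inf_nat_def)
  obtain t where "t \<in> mixset n A" using mixset_nonempty[OF st pr] n by auto
  then show mem: "tau_mix n A \<in> mixset n A" unfolding tm by (rule LeastI)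
  have "0 \<notin> mixset n A"
  proof
    assume "0 \<in> mixset n A"
    then have all: "\<forall>i<n. \<forall>j<n. (\<Sum>k<n. \<bar>matpow n A 0 i k - matpow n A 0 j k\<bar>) \<le> 1 / exp 1"
      unfolding mixset_def mem_Collect_eq .
    have "(\<Sum>k<n. \<bar>matpow n A 0 0 k - matpow n A 0 1 k\<bar>) \<le> 1 / exp 1"
      by (rule all[rule_format]) (use n in auto)
    moreover have "\<bar>matpow n A 0 0 0 - matpow n A 0 1 0\<bar> \<le> (\<Sum>k<n. \<bar>matpow n A 0 0 k - matpow n A 0 1 k\<bar>)"
      by (rule member_le_sum[where f = "\<lambda>k. \<bar>matpow n A 0 0 k - matpow n A 0 1 k\<bar>"]) (use n in auto)
    moreover have "1 / exp 1 < (1::real)" by simp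
    ultimately show False by simp
  qed
  then show "1 \<le> tau_mix n A" using mem by (cases "tau_mix n A") auto
qed

context prob_space
begin

lemma gauss_basic:
  fixes \<xi> :: "nat \<Rightarrow> 'a \<Rightarrow> real"
  assumes g: "distributed M lborel X (normal_density 0 \<sigma>)" and \<sigma>: "0 < \<sigma>"
  shows "X \<in> borel_measurable M" "integrable M (\<lambda>\<omega>. X \<omega> ^ 2)" "integrable M X"
    "expectation X = 0" "expectation (\<lambda>\<omega>. X \<omega> ^ 2) = \<sigma>\<^sup>2"
proof -
  show m: "X \<in> borel_measurable M" using distributed_measurable[OF g] by simp
  have "integrable lborel (\<lambda>x. normal_density 0 \<sigma> x * x ^ 2)"
    using integrable_normal_moment[OF \<sigma>, of 0 2] by simp
  then show i2: "integrable M (\<lambda>\<omega>. X \<omega> ^ 2)"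
    using distributed_integrable[OF g, of "\<lambda>x. x ^ 2"] by simp
  show "integrable M X" by (rule square_integrable_imp_integrable[OF m i2])
  show e: "expectation X = 0" by (rule normal_distributed_expectation[OF \<sigma> g])
  show "expectation (\<lambda>\<omega>. X \<omega> ^ 2) = \<sigma>\<^sup>2"
    using normal_distributed_variance[OF \<sigma> g] e by simp
qed

lemma gauss_lin:
  fixes \<xi> :: "nat \<Rightarrow> 'a \<Rightarrow> real" and a :: "nat \<Rightarrow> real"
  assumes indep: "indep_vars (\<lambda>_. borel) \<xi> {..<n}"
    and g: "\<And>i. i < n \<Longrightarrow> distributed M lborel (\<xi> i) (normal_density 0 \<sigma>)" and \<sigma>: "0 < \<sigma>"
  shows "integrable M (\<lambda>\<omega>. (\<Sum>j<n. a j * \<xi> j \<omega>)\<^sup>2)"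
    and "expectation (\<lambda>\<omega>. (\<Sum>j<n. a j * \<xi> j \<omega>)\<^sup>2) = \<sigma>\<^sup>2 * (\<Sum>j<n. (a j)\<^sup>2)"
proof -
  note gb = gauss_basic[OF g \<sigma>]
  have prod: "integrable M (\<lambda>\<omega>. \<xi> i \<omega> * \<xi> j \<omega>) \<and>
      expectation (\<lambda>\<omega>. \<xi> i \<omega> * \<xi> j \<omega>) = (if i = j then \<sigma>\<^sup>2 else 0)"
    if ij: "i < n" "j < n" for i j
  proof (cases "i = j")
    case True
    then show ?thesis using gb(2,5)[OF ij(1)] by (simp add: power2_eq_square)
  next
    case False
    have "indep_vars (\<lambda>_. borel) \<xi> (insert i {j})"
      by (rule indep_vars_subset[OF indep]) (use ij in auto)
    from indep_vars_sum[OF _ _ this] False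
    have iv: "indep_var borel (\<xi> i) borel (\<xi> j)" by simp
    show ?thesis
      using indep_var_integrable[OF iv gb(3)[OF ij(1)] gb(3)[OF ij(2)]]
        indep_var_lebesgue_integral[OF iv gb(3)[OF ij(1)] gb(3)[OF ij(2)]]
        gb(4)[OF ij(1)] False by simp
  qed
  have sq: "(\<Sum>j<n. a j * \<xi> j \<omega>)\<^sup>2 = (\<Sum>i<n. \<Sum>j<n. a i * a j * (\<xi> i \<omega> * \<xi> j \<omega>))" for \<omega>
    by (simp add: power2_eq_square sum_product mult_ac)
  show "integrable M (\<lambda>\<omega>. (\<Sum>j<n. a j * \<xi> j \<omega>)\<^sup>2)"
    unfolding sq by (intro Bochner_Integration.integrable_sum integrable_mult_right) (use prod in blast)
  have "expectation (\<lambda>\<omega>. (\<Sum>j<n. a j * \<xi> j \<omega>)\<^sup>2)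
      = (\<Sum>i<n. \<Sum>j<n. a i * a j * expectation (\<lambda>\<omega>. \<xi> i \<omega> * \<xi> j \<omega>))"
  proof -
    have ii: "integrable M (\<lambda>\<omega>. a i * a j * (\<xi> i \<omega> * \<xi> j \<omega>))" if "i < n" "j < n" for i j
      using prod[OF that] by (intro integrable_mult_right) blast
    have "expectation (\<lambda>\<omega>. \<Sum>i<n. \<Sum>j<n. a i * a j * (\<xi> i \<omega> * \<xi> j \<omega>))
        = (\<Sum>i<n. expectation (\<lambda>\<omega>. \<Sum>j<n. a i * a j * (\<xi> i \<omega> * \<xi> j \<omega>)))"
      by (rule Bochner_Integration.integral_sum) (intro Bochner_Integration.integrable_sum ii, auto)
    also have "\<dots> = (\<Sum>i<n. \<Sum>j<n. expectation (\<lambda>\<omega>. a i * a j * (\<xi> i \<omega> * \<xi> j \<omega>)))"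
      by (intro sum.cong refl Bochner_Integration.integral_sum ii) auto
    also have "\<dots> = (\<Sum>i<n. \<Sum>j<n. a i * a j * expectation (\<lambda>\<omega>. \<xi> i \<omega> * \<xi> j \<omega>))"
      by simp
    finally show ?thesis unfolding sq .
  qed
  also have "\<dots> = (\<Sum>i<n. \<Sum>j<n. a i * a j * (if i = j then \<sigma>\<^sup>2 else 0))"
    using prod by simp
  also have "\<dots> = \<sigma>\<^sup>2 * (\<Sum>j<n. (a j)\<^sup>2)"
    by (simp add: sum_distrib_left power2_eq_square mult_ac if_distrib[of "\<lambda>x. _ * x"] sum.delta' cong: if_cong)
  finally show "expectation (\<lambda>\<omega>. (\<Sum>j<n. a j * \<xi> j \<omega>)\<^sup>2) = \<sigma>\<^sup>2 * (\<Sum>j<n. (a j)\<^sup>2)" .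
qed

lemma gauss_tail:
  fixes \<xi> :: "nat \<Rightarrow> 'a \<Rightarrow> real" and a :: "nat \<Rightarrow> real"
  assumes indep: "indep_vars (\<lambda>_. borel) \<xi> {..<n}"
    and g: "\<And>i. i < n \<Longrightarrow> distributed M lborel (\<xi> i) (normal_density 0 \<sigma>)" and \<sigma>: "0 < \<sigma>"
    and t: "0 < t"
  shows "{\<omega>\<in>space M. t < \<bar>\<Sum>j<n. a j * \<xi> j \<omega>\<bar>} \<in> sets M"
    and "prob {\<omega>\<in>space M. t < \<bar>\<Sum>j<n. a j * \<xi> j \<omega>\<bar>} \<le> \<sigma>\<^sup>2 * (\<Sum>j<n. (a j)\<^sup>2) / t\<^sup>2"
proof -
  define Y where "Y \<omega> = (\<Sum>j<n. a j * \<xi> j \<omega>)" for \<omega>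
  have [measurable]: "Y \<in> borel_measurable M"
    unfolding Y_def using gauss_basic(1)[OF g \<sigma>] by (intro borel_measurable_sum borel_measurable_times) auto
  show "{\<omega>\<in>space M. t < \<bar>\<Sum>j<n. a j * \<xi> j \<omega>\<bar>} \<in> sets M"
    unfolding Y_def[symmetric] by measurable
  have "prob {\<omega>\<in>space M. t < \<bar>Y \<omega>\<bar>} \<le> prob {\<omega>\<in>space M. t\<^sup>2 \<le> (Y \<omega>)\<^sup>2}"
  proof (rule finite_measure_mono)
    show "{\<omega>\<in>space M. t < \<bar>Y \<omega>\<bar>} \<subseteq> {\<omega>\<in>space M. t\<^sup>2 \<le> (Y \<omega>)\<^sup>2}"
      using t by (auto simp: abs_le_square_iff[symmetric] intro: less_imp_le)
    show "{\<omega>\<in>space M. t\<^sup>2 \<le> (Y \<omega>)\<^sup>2} \<in> events" by measurable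
  qed
  also have "\<dots> \<le> expectation (\<lambda>\<omega>. (Y \<omega>)\<^sup>2) / t\<^sup>2"
    by (rule integral_Markov_inequality_measure[where A = "space M"])
       (use gauss_lin(1)[OF indep g \<sigma>, of a] t in \<open>auto simp: Y_def\<close>)
  also have "\<dots> = \<sigma>\<^sup>2 * (\<Sum>j<n. (a j)\<^sup>2) / t\<^sup>2"
    unfolding Y_def using gauss_lin(2)[OF indep g \<sigma>, of a] by simp
  finally show "prob {\<omega>\<in>space M. t < \<bar>\<Sum>j<n. a j * \<xi> j \<omega>\<bar>} \<le> \<sigma>\<^sup>2 * (\<Sum>j<n. (a j)\<^sup>2) / t\<^sup>2"
    unfolding Y_def .
qed

end

definition cvec :: "nat \<Rightarrow> (nat \<Rightarrow> nat \<Rightarrow> real) \<Rightarrow> nat \<Rightarrow> nat \<Rightarrow> real" where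
  "cvec n A k j = (\<Sum>i<n. matpow n A k i j) / real n"

definition dvec :: "nat \<Rightarrow> (nat \<Rightarrow> nat \<Rightarrow> real) \<Rightarrow> nat \<Rightarrow> nat \<Rightarrow> nat \<Rightarrow> nat \<Rightarrow> real" where
  "dvec n A \<tau> r l j = cvec n A (r + Suc l * \<tau>) j - cvec n A (r + l * \<tau>) j"

lemma cvec_nonneg: "stochastic n A \<Longrightarrow> j < n \<Longrightarrow> 0 \<le> cvec n A k j"
  unfolding cvec_def by (intro divide_nonneg_nonneg sum_nonneg) (auto intro: matpow_nonneg)

lemma cvec_sum:
  assumes st: "stochastic n A" and n: "1 \<le> n"
  shows "(\<Sum>j<n. cvec n A k j) = 1"
proof -
  have "(\<Sum>j<n. cvec n A k j) = (\<Sum>j<n. \<Sum>i<n. matpow n A k i j) / real n"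
    unfolding cvec_def by (simp add: sum_divide_distrib)
  also have "\<dots> = (\<Sum>i<n. \<Sum>j<n. matpow n A k i j) / real n"
    by (subst sum.swap) (rule refl)
  also have "\<dots> = 1" using n by (simp add: matpow_rowsum[OF st])
  finally show ?thesis .
qed

lemma cvec_add:
  assumes j: "j < n"
  shows "cvec n A (a + b) j = (\<Sum>l<n. cvec n A a l * matpow n A b l j)"
proof -
  have "cvec n A (a + b) j = (\<Sum>i<n. \<Sum>l<n. matpow n A a i l * matpow n A b l j) / real n"
    unfolding cvec_def using matpow_add[OF j] by simp
  also have "\<dots> = (\<Sum>l<n. \<Sum>i<n. matpow n A a i l * matpow n A b l j) / real n"
    by (subst sum.swap) simp
  also have "\<dots> = (\<Sum>l<n. cvec n A a l * matpow n A b l j)"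
    unfolding cvec_def by (simp add: sum_divide_distrib sum_distrib_right)
  finally show ?thesis .
qed

lemma ave_state_eq:
  assumes st: "stochastic n A" and n: "1 \<le> n"
  shows "ave n (state n A \<mu> x k) - \<mu> = (\<Sum>j<n. cvec n A k j * x j)"
proof -
  have si: "state n A \<mu> x k i = (\<Sum>j<n. matpow n A k i j) * \<mu> + (\<Sum>j<n. matpow n A k i j * x j)" for i
    unfolding state_def by (simp add: distrib_left sum.distrib sum_distrib_right)
  have "(\<Sum>i<n. state n A \<mu> x k i) = (\<Sum>i<n. (\<Sum>j<n. matpow n A k i j) * \<mu> + (\<Sum>j<n. matpow n A k i j * x j))"
    unfolding si ..
  also have "\<dots> = real n * \<mu> + (\<Sum>j<n. (\<Sum>i<n. matpow n A k i j) * x j)"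
    by (simp add: matpow_rowsum[OF st] sum.distrib sum_distrib_right) (rule sum.swap)
  finally have "(\<Sum>i<n. state n A \<mu> x k i) = real n * \<mu> + (\<Sum>j<n. (\<Sum>i<n. matpow n A k i j) * x j)" .
  moreover have cx: "(\<Sum>j<n. cvec n A k j * x j) = (\<Sum>j<n. (\<Sum>i<n. matpow n A k i j) * x j) / real n"
    unfolding cvec_def sum_divide_distrib by (simp add: sum_divide_distrib[symmetric])
  ultimately show ?thesis
    unfolding ave_def using n by (simp add: field_simps)
qed

lemma dvec_bound:
  assumes st: "stochastic n A" and n: "1 \<le> n" and mix: "\<tau> \<in> mixset n A"
  shows "(\<Sum>j<n. \<bar>dvec n A \<tau> r l j\<bar>) \<le> 2 * (1 / 4) ^ l"
proof (induction l)
  case 0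
  have "(\<Sum>j<n. \<bar>dvec n A \<tau> r 0 j\<bar>) \<le> (\<Sum>j<n. cvec n A (r + \<tau>) j + cvec n A r j)"
    unfolding dvec_def
  proof (intro sum_mono)
    fix j assume "j \<in> {..<n}"
    then have "0 \<le> cvec n A (r + \<tau>) j" "0 \<le> cvec n A r j" using cvec_nonneg[OF st] by auto
    then show "\<bar>cvec n A (r + Suc 0 * \<tau>) j - cvec n A (r + 0 * \<tau>) j\<bar> \<le> cvec n A (r + \<tau>) j + cvec n A r j"
      by simp
  qed
  also have "\<dots> = 2" by (simp add: sum.distrib cvec_sum[OF st n])
  finally show ?case by simp
next
  case (Suc l)
  have QD: "(\<Sum>k<n. \<bar>matpow n A \<tau> i k - matpow n A \<tau> j k\<bar>) \<le> 1 / exp 1" if "i < n" "j < n" for i j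
    using mix that unfolding mixset_def by blast
  have e: "dvec n A \<tau> r (Suc l) j = (\<Sum>i<n. dvec n A \<tau> r l i * matpow n A \<tau> i j)" if j: "j < n" for j
  proof -
    have t1: "r + Suc (Suc l) * \<tau> = (r + Suc l * \<tau>) + \<tau>" by simp
    have t2: "r + Suc l * \<tau> = (r + l * \<tau>) + \<tau>" by simp
    show ?thesis unfolding dvec_def
      by (subst t1, subst (2) t2, simp only: cvec_add[OF j]) (simp add: left_diff_distrib sum_subtractf)
  qed
  have s0: "(\<Sum>i<n. dvec n A \<tau> r l i) = 0"
    unfolding dvec_def by (simp add: sum_subtractf cvec_sum[OF st n])
  have "(\<Sum>j<n. \<bar>dvec n A \<tau> r (Suc l) j\<bar>) = (\<Sum>j<n. \<bar>\<Sum>i<n. dvec n A \<tau> r l i * matpow n A \<tau> i j\<bar>)"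
    using e by simp
  also have "\<dots> \<le> (1 / exp 1) / 2 * (\<Sum>i<n. \<bar>dvec n A \<tau> r l i\<bar>)"
    by (rule contraction[OF s0 QD])
  also have "\<dots> \<le> (1 / 4) * (2 * (1 / 4) ^ l)"
  proof (rule mult_mono)
    have "2 \<le> exp (1::real)" using exp_ge_add_one_self[of 1] by simp
    then show "1 / exp 1 / 2 \<le> (1 / 4 :: real)" by (simp add: field_simps)
  qed (use Suc.IH in auto)
  finally show ?case by simp
qed

lemma cvec_telescope:
  "cvec n A (r + m * \<tau>) j = cvec n A r j + (\<Sum>l<m. dvec n A \<tau> r l j)"
proof -
  have "(\<Sum>l<m. dvec n A \<tau> r l j) = cvec n A (r + m * \<tau>) j - cvec n A (r + 0 * \<tau>) j"
    unfolding dvec_def by (rule sum_lessThan_telescope[where f = "\<lambda>l. cvec n A (r + l * \<tau>) j"])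
  then show ?thesis by simp
qed

context prob_space
begin

lemma main_bound:
  fixes \<xi> :: "nat \<Rightarrow> 'a \<Rightarrow> real"
  assumes st: "stochastic n A" and pr: "primitive n A" and n: "2 \<le> n" and \<sigma>: "0 < \<sigma>"
    and indep: "indep_vars (\<lambda>_. borel) \<xi> {..<n}"
    and g: "\<And>i. i < n \<Longrightarrow> distributed M lborel (\<xi> i) (normal_density 0 \<sigma>)"
    and eps: "0 < \<epsilon>" and s: "\<And>k j. j < n \<Longrightarrow> cvec n A k j \<le> s"
  shows "prob {\<omega>\<in>space M. \<epsilon> < (SUP k. \<bar>ave n (state n A \<mu> (\<lambda>j. \<xi> j \<omega>) k) - \<mu>\<bar>)}
           \<le> 235 * \<sigma>\<^sup>2 / \<epsilon>\<^sup>2 * (real (tau_mix n A) * s)"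
proof -
  define \<tau> where "\<tau> = tau_mix n A"
  have \<tau>1: "1 \<le> \<tau>" and mix: "\<tau> \<in> mixset n A" using tau_mix_props[OF st pr n] by (auto simp: \<tau>_def)
  have n1: "1 \<le> n" using n by simp
  have s0: "0 \<le> s"
  proof -
    have "0 < n" using n by simp
    then show ?thesis using s[of 0 0] cvec_nonneg[OF st, of 0 0] by linarith
  qed
  define Y where "Y a \<omega> = (\<Sum>j<n. a j * \<xi> j \<omega>)" for a \<omega>
  define e where "e l = \<epsilon> / 8 * (3/4)^l" for l :: nat
  define E where "E r = {\<omega>\<in>space M. \<epsilon>/2 < \<bar>Y (cvec n A r) \<omega>\<bar>}" for r
  define F where "F r l = {\<omega>\<in>space M. e l < \<bar>Y (dvec n A \<tau> r l) \<omega>\<bar>}" for r l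
  define B where "B = (\<Union>r<\<tau>. E r \<union> (\<Union>l. F r l))"
  have GT1: "\<And>a t. 0 < t \<Longrightarrow> {\<omega>\<in>space M. t < \<bar>\<Sum>j<n. a j * \<xi> j \<omega>\<bar>} \<in> sets M"
    using gauss_tail(1)[OF indep g \<sigma>] by auto
  have GT2: "\<And>a t. 0 < t \<Longrightarrow> prob {\<omega>\<in>space M. t < \<bar>\<Sum>j<n. a j * \<xi> j \<omega>\<bar>} \<le> \<sigma>\<^sup>2 * (\<Sum>j<n. (a j)\<^sup>2) / t\<^sup>2"
    using gauss_tail(2)[OF indep g \<sigma>] by auto
  have e_pos: "0 < e l" for l unfolding e_def using eps by simp
  have Emeas: "E r \<in> sets M" for r
  proof -
    have "0 < \<epsilon> / 2" using eps by simp
    then show ?thesis unfolding E_def Y_def by (rule GT1)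
  qed
  have Fmeas: "F r l \<in> sets M" for r l
    unfolding F_def Y_def by (rule GT1[OF e_pos])
  have Bmeas: "B \<in> sets M" unfolding B_def using Emeas Fmeas by auto
  have sub: "{\<omega>\<in>space M. \<epsilon> < (SUP k. \<bar>ave n (state n A \<mu> (\<lambda>j. \<xi> j \<omega>) k) - \<mu>\<bar>)} \<subseteq> B"
  proof
    fix \<omega> assume "\<omega> \<in> {\<omega>\<in>space M. \<epsilon> < (SUP k. \<bar>ave n (state n A \<mu> (\<lambda>j. \<xi> j \<omega>) k) - \<mu>\<bar>)}"
    then have \<omega>: "\<omega> \<in> space M" and gt: "\<epsilon> < (SUP k. \<bar>ave n (state n A \<mu> (\<lambda>j. \<xi> j \<omega>) k) - \<mu>\<bar>)"
      by auto
    have "\<exists>k. \<epsilon> < \<bar>ave n (state n A \<mu> (\<lambda>j. \<xi> j \<omega>) k) - \<mu>\<bar>"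
    proof (rule ccontr)
      assume "\<not> ?thesis"
      then have "(SUP k. \<bar>ave n (state n A \<mu> (\<lambda>j. \<xi> j \<omega>) k) - \<mu>\<bar>) \<le> \<epsilon>"
        by (intro cSUP_least) (auto simp: not_less)
      with gt show False by simp
    qed
    then obtain k where k: "\<epsilon> < \<bar>ave n (state n A \<mu> (\<lambda>j. \<xi> j \<omega>) k) - \<mu>\<bar>" by blast
    define r m where "r = k mod \<tau>" and "m = k div \<tau>"
    have r: "r < \<tau>" using \<tau>1 by (simp add: r_def)
    have kk: "k = r + m * \<tau>" by (simp add: r_def m_def)
    have yk: "ave n (state n A \<mu> (\<lambda>j. \<xi> j \<omega>) k) - \<mu> = Y (cvec n A r) \<omega> + (\<Sum>l<m. Y (dvec n A \<tau> r l) \<omega>)"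
    proof -
      have "ave n (state n A \<mu> (\<lambda>j. \<xi> j \<omega>) k) - \<mu> = (\<Sum>j<n. (cvec n A r j + (\<Sum>l<m. dvec n A \<tau> r l j)) * \<xi> j \<omega>)"
        unfolding ave_state_eq[OF st n1] kk cvec_telescope ..
      also have "\<dots> = Y (cvec n A r) \<omega> + (\<Sum>j<n. \<Sum>l<m. dvec n A \<tau> r l j * \<xi> j \<omega>)"
        unfolding Y_def by (simp add: distrib_right sum.distrib sum_distrib_right)
      also have "(\<Sum>j<n. \<Sum>l<m. dvec n A \<tau> r l j * \<xi> j \<omega>) = (\<Sum>l<m. Y (dvec n A \<tau> r l) \<omega>)"
        unfolding Y_def by (rule sum.swap)
      finally show ?thesis .
    qed
    show "\<omega> \<in> B"
    proof (rule ccontr)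
      assume nb: "\<omega> \<notin> B"
      then have "\<omega> \<notin> E r" "\<And>l. \<omega> \<notin> F r l" using r unfolding B_def by auto
      then have h1: "\<bar>Y (cvec n A r) \<omega>\<bar> \<le> \<epsilon>/2" and h2: "\<And>l. \<bar>Y (dvec n A \<tau> r l) \<omega>\<bar> \<le> e l"
        using \<omega> unfolding E_def F_def by (auto simp: not_less)
      have "\<bar>\<Sum>l<m. Y (dvec n A \<tau> r l) \<omega>\<bar> \<le> (\<Sum>l<m. e l)"
        by (rule order_trans[OF sum_abs sum_mono]) (use h2 in auto)
      also have "(\<Sum>l<m. e l) \<le> \<epsilon> / 2"
      proof -
        have "(\<Sum>l<m. e l) = \<epsilon> / 8 * (\<Sum>l<m. (3/4::real)^l)" unfolding e_def by (simp add: sum_distrib_left)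
        also have "\<dots> \<le> \<epsilon> / 8 * 4"
        proof (rule mult_left_mono)
          show "(\<Sum>l<m. (3/4::real)^l) \<le> 4" using geometric_sum_less[of "3/4::real" "{..<m}"] by simp
        qed (use eps in simp)
        finally show ?thesis by simp
      qed
      finally have "\<bar>\<Sum>l<m. Y (dvec n A \<tau> r l) \<omega>\<bar> \<le> \<epsilon> / 2" .
      then have "\<bar>ave n (state n A \<mu> (\<lambda>j. \<xi> j \<omega>) k) - \<mu>\<bar> \<le> \<epsilon>" unfolding yk using h1 by linarith
      with k show False by simp
    qed
  qed
  have PE: "prob (E r) \<le> 4 * \<sigma>\<^sup>2 * s / \<epsilon>\<^sup>2" for r
  proof -
    have c2: "(\<Sum>j<n. (cvec n A r j)\<^sup>2) \<le> s"
    proof -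
      have "(\<Sum>j<n. (cvec n A r j)\<^sup>2) \<le> (\<Sum>j<n. s * cvec n A r j)"
        by (intro sum_mono) (simp add: power2_eq_square mult_right_mono s cvec_nonneg[OF st])
      also have "\<dots> = s" by (simp add: sum_distrib_left[symmetric] cvec_sum[OF st n1])
      finally show ?thesis .
    qed
    have "prob (E r) \<le> \<sigma>\<^sup>2 * (\<Sum>j<n. (cvec n A r j)\<^sup>2) / (\<epsilon>/2)\<^sup>2"
      unfolding E_def Y_def by (rule GT2) (use eps in simp)
    also have "\<dots> \<le> \<sigma>\<^sup>2 * s / (\<epsilon>/2)\<^sup>2"
      by (intro divide_right_mono mult_left_mono c2) auto
    also have "\<dots> = 4 * \<sigma>\<^sup>2 * s / \<epsilon>\<^sup>2"
      by (simp add: power_divide)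
    finally show ?thesis .
  qed
  have alg: "\<sigma>\<^sup>2 * (s * (2 * (p * q))) / (\<epsilon>\<^sup>2 / 64 * q) = 128 * \<sigma>\<^sup>2 * s / \<epsilon>\<^sup>2 * p"
    if "0 < q" for p q :: real
    using that eps by (simp add: field_simps)
  have PF: "prob (F r l) \<le> 128 * \<sigma>\<^sup>2 * s / \<epsilon>\<^sup>2 * (4/9)^l" for r l
  proof -
    have d2: "(\<Sum>j<n. (dvec n A \<tau> r l j)\<^sup>2) \<le> s * (2 * (1/4)^l)"
    proof -
      have "(\<Sum>j<n. (dvec n A \<tau> r l j)\<^sup>2) \<le> (\<Sum>j<n. s * \<bar>dvec n A \<tau> r l j\<bar>)"
      proof (intro sum_mono)
        fix j assume "j \<in> {..<n}"
        then have j: "j < n" by simp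
        have "0 \<le> cvec n A (r + Suc l * \<tau>) j" "0 \<le> cvec n A (r + l * \<tau>) j"
          "cvec n A (r + Suc l * \<tau>) j \<le> s" "cvec n A (r + l * \<tau>) j \<le> s"
          using s[OF j] cvec_nonneg[OF st j] by auto
        then have ab: "\<bar>dvec n A \<tau> r l j\<bar> \<le> s"
          unfolding dvec_def abs_le_iff by linarith
        have "(dvec n A \<tau> r l j)\<^sup>2 = \<bar>dvec n A \<tau> r l j\<bar> * \<bar>dvec n A \<tau> r l j\<bar>"
          by (simp add: power2_eq_square)
        also have "\<dots> \<le> s * \<bar>dvec n A \<tau> r l j\<bar>"
          by (rule mult_right_mono[OF ab]) simp
        finally show "(dvec n A \<tau> r l j)\<^sup>2 \<le> s * \<bar>dvec n A \<tau> r l j\<bar>" .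
      qed
      also have "\<dots> \<le> s * (2 * (1/4)^l)"
        unfolding sum_distrib_left[symmetric] by (rule mult_left_mono[OF dvec_bound[OF st n1 mix] s0])
      finally show ?thesis .
    qed
    have "prob (F r l) \<le> \<sigma>\<^sup>2 * (\<Sum>j<n. (dvec n A \<tau> r l j)\<^sup>2) / (e l)\<^sup>2"
      unfolding F_def Y_def by (rule GT2[OF e_pos])
    also have "\<dots> \<le> \<sigma>\<^sup>2 * (s * (2 * (1/4)^l)) / (e l)\<^sup>2"
      by (intro divide_right_mono mult_left_mono d2) auto
    also have "(1/4::real)^l = (4/9)^l * (9/16)^l"
      by (simp add: power_mult_distrib[symmetric])
    also have "(e l)\<^sup>2 = \<epsilon>\<^sup>2 / 64 * (9/16::real)^l"
    proof -
      have p: "((3/4::real)^l)\<^sup>2 = (9/16)^l"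
        by (simp add: power_mult_distrib[symmetric] power2_eq_square)
      show ?thesis unfolding e_def power_mult_distrib p by (simp add: power_divide)
    qed
    also have "\<sigma>\<^sup>2 * (s * (2 * ((4/9)^l * (9/16)^l))) / (\<epsilon>\<^sup>2 / 64 * (9/16::real)^l) = 128 * \<sigma>\<^sup>2 * s / \<epsilon>\<^sup>2 * (4/9)^l"
      by (rule alg) simp
    finally show ?thesis .
  qed
  define K where "K = \<sigma>\<^sup>2 * s / \<epsilon>\<^sup>2"
  have K0: "0 \<le> K" unfolding K_def using s0 by simp
  have PFK: "norm (prob (F r l)) \<le> 128 * K * (4/9::real)^l" for r l
  proof -
    have "128 * K * (4/9::real)^l = 128 * \<sigma>\<^sup>2 * s / \<epsilon>\<^sup>2 * (4/9)^l" unfolding K_def by simp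
    then show ?thesis using PF[of r l] by simp
  qed
  have geo: "summable (\<lambda>l. 128 * K * (4/9::real)^l)" "(\<Sum>l. 128 * K * (4/9::real)^l) = 128 * K * (9/5)"
    by (auto intro!: summable_mult summable_geometric simp: suminf_mult suminf_geometric)
  have PR: "prob (E r \<union> (\<Union>l. F r l)) \<le> 235 * K" for r
  proof -
    have sF: "summable (\<lambda>l. prob (F r l))"
      by (rule summable_comparison_test'[OF geo(1), of 0]) (use PFK in auto)
    have "prob (\<Union>l. F r l) \<le> (\<Sum>l. prob (F r l))"
      by (rule finite_measure_subadditive_countably) (use Fmeas sF in auto)
    also have "\<dots> \<le> (\<Sum>l. 128 * K * (4/9::real)^l)"
      by (rule suminf_le[OF _ sF geo(1)]) (use PFK in auto)
    finally have "prob (\<Union>l. F r l) \<le> 128 * K * (9/5)" using geo(2) by simp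
    moreover have "prob (E r \<union> (\<Union>l. F r l)) \<le> prob (E r) + prob (\<Union>l. F r l)"
      by (rule measure_Un_le) (use Emeas Fmeas in auto)
    moreover have "prob (E r) \<le> 4 * K" using PE[of r] by (simp add: K_def mult.assoc)
    ultimately show ?thesis using K0 by simp
  qed
  have "prob {\<omega>\<in>space M. \<epsilon> < (SUP k. \<bar>ave n (state n A \<mu> (\<lambda>j. \<xi> j \<omega>) k) - \<mu>\<bar>)} \<le> prob B"
    by (rule finite_measure_mono[OF sub Bmeas])
  also have "\<dots> \<le> (\<Sum>r<\<tau>. prob (E r \<union> (\<Union>l. F r l)))"
    unfolding B_def by (rule finite_measure_subadditive_finite) (use Emeas Fmeas in auto)
  also have "\<dots> \<le> (\<Sum>r<\<tau>. 235 * K)" by (rule sum_mono[OF PR])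
  also have "\<dots> = 235 * \<sigma>\<^sup>2 / \<epsilon>\<^sup>2 * (real (tau_mix n A) * s)"
    by (simp add: K_def \<tau>_def)
  finally show ?thesis .
qed

end

lemma cvec_le_norm1:
  assumes st: "stochastic n A" and j: "j < n"
  shows "cvec n A k j \<le> norm1 n (\<lambda>i j. matpow n A k i j / real n)"
    and "norm1 n (\<lambda>i j. matpow n A k i j / real n) \<le> 1"
proof -
  have col: "(\<Sum>i<n. \<bar>matpow n A k i j' / real n\<bar>) = cvec n A k j'" if "j' < n" for j'
    unfolding cvec_def using matpow_nonneg[OF st _ that] by (simp add: sum_divide_distrib)
  have n1: "1 \<le> n" using j by simp
  have img: "(\<lambda>j. \<Sum>i<n. \<bar>matpow n A k i j / real n\<bar>) ` {..<n} = (\<lambda>j. cvec n A k j) ` {..<n}"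
    using col by (intro image_cong) auto
  have ne: "{..<n} \<noteq> {}" using j by auto
  show "cvec n A k j \<le> norm1 n (\<lambda>i j. matpow n A k i j / real n)"
    unfolding norm1_def img by (rule Max_ge) (use j in auto)
  have "cvec n A k j' \<le> 1" if "j' < n" for j'
  proof -
    have "cvec n A k j' \<le> (\<Sum>j<n. cvec n A k j)"
      by (rule member_le_sum[where f = "\<lambda>j. cvec n A k j"]) (use that cvec_nonneg[OF st] in auto)
    then show ?thesis using cvec_sum[OF st n1] by simp
  qed
  then show "norm1 n (\<lambda>i j. matpow n A k i j / real n) \<le> 1"
    unfolding norm1_def img using ne by (subst Max_le_iff) auto
qed

theorem theorem2:
  fixes M :: "'a measure"
    and P :: "nat \<Rightarrow> nat \<Rightarrow> nat \<Rightarrow> real"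
    and \<xi> :: "nat \<Rightarrow> nat \<Rightarrow> 'a \<Rightarrow> real"
    and \<mu> \<sigma> :: real
  assumes "prob_space M"
    and stoch: "\<And>n. n \<ge> 1 \<Longrightarrow> stochastic n (P n)"
    and prim: "\<And>n. n \<ge> 1 \<Longrightarrow> primitive n (P n)"
    and sigma_pos: "0 < \<sigma>"
    and indep: "\<And>n. prob_space.indep_vars M (\<lambda>_. borel) (\<xi> n) {..<n}"
    and gauss: "\<And>n i. i < n \<Longrightarrow> distributed M lborel (\<xi> n i) (normal_density 0 \<sigma>)"
    and lim: "(\<lambda>n. (SUP k. norm1 n (\<lambda>i j. matpow n (P n) k i j / real n))
                  * real (tau_mix n (P n))) \<longlonglongrightarrow> 0"
  shows "\<forall>\<epsilon>>0. (\<lambda>n. measure M {\<omega> \<in> space M.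
            (SUP k. \<bar>ave n (state n (P n) \<mu> (\<lambda>j. \<xi> n j \<omega>) k) - \<mu>\<bar>) > \<epsilon>}) \<longlonglongrightarrow> 0"
proof (intro allI impI)
  fix \<epsilon> :: real assume eps: "0 < \<epsilon>"
  interpret prob_space M by fact
  define s where "s n = (SUP k. norm1 n (\<lambda>i j. matpow n (P n) k i j / real n))" for n
  define C where "C = 235 * \<sigma>\<^sup>2 / \<epsilon>\<^sup>2"
  have bound: "measure M {\<omega> \<in> space M. (SUP k. \<bar>ave n (state n (P n) \<mu> (\<lambda>j. \<xi> n j \<omega>) k) - \<mu>\<bar>) > \<epsilon>}
      \<le> C * (s n * real (tau_mix n (P n)))" if n: "2 \<le> n" for n
  proof -
    have st: "stochastic n (P n)" and pr: "primitive n (P n)" using n stoch prim by auto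
    have sb: "cvec n (P n) k j \<le> s n" if j: "j < n" for k j
    proof -
      have bdd: "bdd_above (range (\<lambda>k. norm1 n (\<lambda>i j. matpow n (P n) k i j / real n)))"
        using cvec_le_norm1(2)[OF st j] by (intro bdd_aboveI[of _ 1]) auto
      have "cvec n (P n) k j \<le> norm1 n (\<lambda>i j. matpow n (P n) k i j / real n)"
        by (rule cvec_le_norm1(1)[OF st j])
      also have "\<dots> \<le> s n" unfolding s_def by (rule cSUP_upper[OF _ bdd]) simp
      finally show ?thesis .
    qed
    have "measure M {\<omega> \<in> space M. (SUP k. \<bar>ave n (state n (P n) \<mu> (\<lambda>j. \<xi> n j \<omega>) k) - \<mu>\<bar>) > \<epsilon>}
        \<le> 235 * \<sigma>\<^sup>2 / \<epsilon>\<^sup>2 * (real (tau_mix n (P n)) * s n)"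
      by (rule main_bound[OF st pr n sigma_pos indep gauss eps sb])
    then show ?thesis unfolding C_def by (simp add: mult_ac)
  qed
  have "(\<lambda>n. C * (s n * real (tau_mix n (P n)))) \<longlonglongrightarrow> C * 0"
    by (rule tendsto_mult[OF tendsto_const]) (use lim in \<open>simp add: s_def\<close>)
  then have h: "(\<lambda>n. C * (s n * real (tau_mix n (P n)))) \<longlonglongrightarrow> 0" by simp
  show "(\<lambda>n. measure M {\<omega> \<in> space M.
            (SUP k. \<bar>ave n (state n (P n) \<mu> (\<lambda>j. \<xi> n j \<omega>) k) - \<mu>\<bar>) > \<epsilon>}) \<longlonglongrightarrow> 0"
  proof (rule tendsto_sandwich[OF _ _ tendsto_const h])
    show "\<forall>\<^sub>F n in sequentially. 0 \<le> measure M {\<omega> \<in> space M.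
            (SUP k. \<bar>ave n (state n (P n) \<mu> (\<lambda>j. \<xi> n j \<omega>) k) - \<mu>\<bar>) > \<epsilon>}"
      by simp
    show "\<forall>\<^sub>F n in sequentially. measure M {\<omega> \<in> space M.
            (SUP k. \<bar>ave n (state n (P n) \<mu> (\<lambda>j. \<xi> n j \<omega>) k) - \<mu>\<bar>) > \<epsilon>}
          \<le> C * (s n * real (tau_mix n (P n)))"
      using bound by (intro eventually_sequentiallyI[of 2]) auto
  qed
qed

end
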